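(* For every $n\ge 10$ there exist a set $S$ of pairwise non-isomorphic graphs, each with at most $n$ vertices, a concept $c:S\to\{0,1\}$, and a graph $F$ such that, with $\mathcal{F}=\{F\}$: (1) the graphs in $S$ are pairwise distinguished by $1$-WL after one round; (2) for every $T\ge 0$, the sample $\{(\overline{\phi^{(T)}_{\mathsf{WL}}}(G),c(G)):G\in S\}$ is not linearly separable; (3) for every $T\ge 0$, the sample $\{(\overline{\phi^{(T)}_{\mathsf{WL},\mathcal{F}}}(G),c(G)):G\in S\}$ is linearly separable. Moreover, (2) and (3) also hold with the unnormalised feature vectors $\phi^{(T)}_{\mathsf{WL}}$ and $\phi^{(T)}_{\mathsf{WL},\mathcal{F}}$.
   Context: Graphs are finite, simple, undirected, unlabeled. $1$-WL: $C^1_0$ constant, $C^1_t(v)=\mathsf{RELABEL}(C^1_{t-1}(v),\{\!\{C^1_{t-1}(u):u\in N(v)\}\!\})$ with a fixed injective $\mathsf{RELABEL}$ shared by all graphs; $1$-WL distinguishes two graphs after one round if for some round $s\le1$ some colour occurs a different number of times in them. $1$-WL$_{\mathcal{F}}$: same update with initial colour $(\ell_F(v))_{F\in\mathcal{F}}$, where $\ell_F(v)=1$ if $v$ lies in a vertex set $X$ with induced subgraph $G[X]$ isomorphic to $F$, else $0$. $\phi_t(G)$ (resp. $\phi_{\mathcal{F},t}(G)$) counts the vertices of $G$ of each colour occurring at round $t$ among the graphs of $S$; $\phi^{(T)}_{\mathsf{WL}}(G)=[\phi_0(G),\dots,\phi_T(G)]$, $\phi^{(T)}_{\mathsf{WL},\mathcal{F}}(G)=[\phi_{\mathcal{F},0}(G),\dots,\phi_{\mathcal{F},T}(G)]$;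 a bar denotes normalisation to unit Euclidean norm. A labelled set of vectors is linearly separable if there are $\mathbf{w},b$ with $\mathbf{w}^\top\mathbf{x}+b>0$ for label $1$ and $<0$ for label $0$. *)

theory Defs
  imports Complex_Main "HOL-Library.Multiset"
begin

text \<open>A finite simple undirected graph with vertex set {0..<k} and
  symmetric irreflexive adjacency relation E (false outside the vertex set).\<close>
type_synonym graph = "nat \<times> (nat \<Rightarrow> nat \<Rightarrow> bool)"

definition wf_graph :: "graph \<Rightarrow> bool" where
  "wf_graph G \<longleftrightarrow> (\<forall>u v. snd G u v \<longrightarrow> u < fst G \<and> v < fst G)
     \<and> (\<forall>u v. snd G u v \<longrightarrow> snd G v u) \<and> (\<forall>v. \<not> snd G v v)"

definition graph_iso :: "graph \<Rightarrow> graph \<Rightarrow> bool" where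
  "graph_iso G H \<longleftrightarrow> (\<exists>f. bij_betw f {..<fst G} {..<fst H}
     \<and> (\<forall>a<fst G. \<forall>b<fst G. snd G a b \<longleftrightarrow> snd H (f a) (f b)))"

definition in_induced_copy :: "graph \<Rightarrow> graph \<Rightarrow> nat \<Rightarrow> bool" where
  "in_induced_copy F G v \<longleftrightarrow> (\<exists>X. X \<subseteq> {..<fst G} \<and> v \<in> X \<and>
     (\<exists>f. bij_betw f {..<fst F} X
        \<and> (\<forall>a<fst F. \<forall>b<fst F. snd F a b \<longleftrightarrow> snd G (f a) (f b))))"

text \<open>WL colours: the free constructor Step plays the role of the injective RELABEL.\<close>
datatype 'a wlcol = Init 'a | Step "'a wlcol" "'a wlcol multiset"

fun wl_col :: "(graph \<Rightarrow> nat \<Rightarrow> 'a) \<Rightarrow> graph \<Rightarrow> nat \<Rightarrow> nat \<Rightarrow> 'a wlcol" where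
  "wl_col init G 0 v = Init (init G v)"
| "wl_col init G (Suc t) v = Step (wl_col init G t v)
     (image_mset (wl_col init G t) (mset_set {u. u < fst G \<and> snd G v u}))"

definition wl1 :: "graph \<Rightarrow> nat \<Rightarrow> nat \<Rightarrow> unit wlcol" where
  "wl1 = wl_col (\<lambda>_ _. ())"

definition wlF :: "graph list \<Rightarrow> graph \<Rightarrow> nat \<Rightarrow> nat \<Rightarrow> nat list wlcol" where
  "wlF Fs = wl_col (\<lambda>G v. map (\<lambda>F. if in_induced_copy F G v then 1 else 0) Fs)"

definition col_count :: "(graph \<Rightarrow> nat \<Rightarrow> nat \<Rightarrow> 'c) \<Rightarrow> graph \<Rightarrow> nat \<Rightarrow> 'c \<Rightarrow> nat" where
  "col_count col G t c = card {v. v < fst G \<and> col G t v = c}"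

definition colours_at :: "(graph \<Rightarrow> nat \<Rightarrow> nat \<Rightarrow> 'c) \<Rightarrow> graph set \<Rightarrow> nat \<Rightarrow> 'c set" where
  "colours_at col S t = {col G t v | G v. G \<in> S \<and> v < fst G}"

text \<open>Coordinates of the concatenated feature vector [phi_0, ..., phi_T].\<close>
definition feat_idx :: "(graph \<Rightarrow> nat \<Rightarrow> nat \<Rightarrow> 'c) \<Rightarrow> graph set \<Rightarrow> nat \<Rightarrow> (nat \<times> 'c) set" where
  "feat_idx col S T = {(t, c). t \<le> T \<and> c \<in> colours_at col S t}"

definition phi :: "(graph \<Rightarrow> nat \<Rightarrow> nat \<Rightarrow> 'c) \<Rightarrow> graph \<Rightarrow> nat \<times> 'c \<Rightarrow> real" where
  "phi col G i = real (col_count col G (fst i) (snd i))"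

definition normalise :: "'i set \<Rightarrow> ('i \<Rightarrow> real) \<Rightarrow> 'i \<Rightarrow> real" where
  "normalise I x i = x i / sqrt (\<Sum>j\<in>I. (x j)^2)"

definition lin_separable :: "'i set \<Rightarrow> 'g set \<Rightarrow> ('g \<Rightarrow> 'i \<Rightarrow> real) \<Rightarrow> ('g \<Rightarrow> nat) \<Rightarrow> bool" where
  "lin_separable I S x c \<longleftrightarrow> (\<exists>w b. \<forall>G\<in>S.
     (c G = 1 \<longrightarrow> (\<Sum>i\<in>I. w i * x G i) + b > 0) \<and>
     (c G = 0 \<longrightarrow> (\<Sum>i\<in>I. w i * x G i) + b < 0))"

definition wl_dist_one_round :: "graph \<Rightarrow> graph \<Rightarrow> bool" where
  "wl_dist_one_round G H \<longleftrightarrow> (\<exists>s\<le>1. \<exists>c. col_count wl1 G s c \<noteq> col_count wl1 H s c)"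

end

theory Submission
  imports Defs
begin

definition mkG :: "(nat \<times> nat) list \<Rightarrow> graph" where
  "mkG es = (9, \<lambda>u v. (u,v) \<in> set es \<or> (v,u) \<in> set es)"

definition "G1 = mkG [(0,1),(2,3),(4,5),(6,7),(7,8),(6,8)]"
definition "G2 = mkG [(6,7),(7,8),(6,8)]"
definition "G3 = mkG [(3,4),(4,5),(5,6),(6,7),(7,8),(3,8)]"
definition "G4 = mkG [(3,4),(5,6),(7,8)]"
definition "K3 = ((3::nat), \<lambda>u v. u < (3::nat) \<and> v < 3 \<and> u \<noteq> v)"

definition dg :: "graph \<Rightarrow> nat \<Rightarrow> nat" where
  "dg G v = card {u. u < fst G \<and> snd G v u}"

lemma lt9: "(v::nat) < 9 \<longleftrightarrow> v = 0 \<or> v = 1 \<or> v = 2 \<or> v = 3 \<or> v = 4 \<or> v = 5 \<or> v = 6 \<or> v = 7 \<or> v = 8"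
  by auto

lemma coll9: "{u. u < (9::nat) \<and> P u} = set (filter P [0..<9])"
  by auto

lemma dg1: "v < 9 \<Longrightarrow> dg G1 v = (if v < 6 then 1 else 2)"
  unfolding lt9 by (auto simp: dg_def G1_def mkG_def coll9 upt_rec)
lemma dg2: "v < 9 \<Longrightarrow> dg G2 v = (if v < 6 then 0 else 2)"
  unfolding lt9 by (auto simp: dg_def G2_def mkG_def coll9 upt_rec)
lemma dg3: "v < 9 \<Longrightarrow> dg G3 v = (if v < 3 then 0 else 2)"
  unfolding lt9 by (auto simp: dg_def G3_def mkG_def coll9 upt_rec)
lemma dg4: "v < 9 \<Longrightarrow> dg G4 v = (if v < 3 then 0 else 1)"
  unfolding lt9 by (auto simp: dg_def G4_def mkG_def coll9 upt_rec)

lemma wf_all: "wf_graph G1" "wf_graph G2" "wf_graph G3" "wf_graph G4" "wf_graph K3"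
  by (auto simp: wf_graph_def G1_def G2_def G3_def G4_def K3_def mkG_def)

lemma fst_all: "fst G1 = 9" "fst G2 = 9" "fst G3 = 9" "fst G4 = 9"
  by (auto simp: G1_def G2_def G3_def G4_def mkG_def)

lemma eqdeg1: "snd G1 u v \<Longrightarrow> (if u < 6 then 1 else 2::nat) = (if v < 6 then 1 else 2)"
  by (auto simp: G1_def mkG_def)
lemma eqdeg2: "snd G2 u v \<Longrightarrow> (if u < 6 then 0 else 2::nat) = (if v < 6 then 0 else 2)"
  by (auto simp: G2_def mkG_def)
lemma eqdeg3: "snd G3 u v \<Longrightarrow> (if u < 3 then 0 else 2::nat) = (if v < 3 then 0 else 2)"
  by (auto simp: G3_def mkG_def)
lemma eqdeg4: "snd G4 u v \<Longrightarrow> (if u < 3 then 0 else 1::nat) = (if v < 3 then 0 else 1)"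
  by (auto simp: G4_def mkG_def)

fun cc :: "nat \<Rightarrow> nat \<Rightarrow> unit wlcol" where
  "cc 0 d = Init ()"
| "cc (Suc t) d = Step (cc t d) (replicate_mset d (cc t d))"

lemma cc_inj: "cc (Suc t) d = cc (Suc t) d' \<Longrightarrow> d = d'"
  by (metis cc.simps(2) size_replicate_mset wlcol.inject(2))

declare cc.simps(2)[simp del]

lemma wl_reg:
  assumes wf: "wf_graph G" and eq: "\<And>u v. snd G u v \<Longrightarrow> dg G u = dg G v"
  shows "v < fst G \<Longrightarrow> wl1 G t v = cc t (dg G v)"
proof (induction t arbitrary: v)
  case 0
  then show ?case by (simp add: wl1_def)
next
  case (Suc t)
  let ?A = "{u. u < fst G \<and> snd G v u}"
  have "image_mset (wl1 G t) (mset_set ?A) = image_mset (\<lambda>_. cc t (dg G v)) (mset_set ?A)"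
  proof (rule image_mset_cong)
    fix u assume "u \<in># mset_set ?A"
    then have "u < fst G" "snd G v u" by auto
    then show "wl1 G t u = cc t (dg G v)" using Suc.IH eq by metis
  qed
  also have "\<dots> = replicate_mset (dg G v) (cc t (dg G v))"
    by (simp add: image_mset_const_eq dg_def)
  finally show ?case using Suc by (simp add: wl1_def cc.simps(2))
qed

lemma eqdg: "snd G1 u v \<Longrightarrow> dg G1 u = dg G1 v" "snd G2 u v \<Longrightarrow> dg G2 u = dg G2 v"
  "snd G3 u v \<Longrightarrow> dg G3 u = dg G3 v" "snd G4 u v \<Longrightarrow> dg G4 u = dg G4 v"
proof -
  have w: "\<And>G u v. wf_graph G \<Longrightarrow> snd G u v \<Longrightarrow> u < fst G \<and> v < fst G" by (simp add: wf_graph_def)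
  show "snd G1 u v \<Longrightarrow> dg G1 u = dg G1 v" using w[OF wf_all(1)] fst_all dg1 eqdeg1 by metis
  show "snd G2 u v \<Longrightarrow> dg G2 u = dg G2 v" using w[OF wf_all(2)] fst_all dg2 eqdeg2 by metis
  show "snd G3 u v \<Longrightarrow> dg G3 u = dg G3 v" using w[OF wf_all(3)] fst_all dg3 eqdeg3 by metis
  show "snd G4 u v \<Longrightarrow> dg G4 u = dg G4 v" using w[OF wf_all(4)] fst_all dg4 eqdeg4 by metis
qed

definition "SS = {G1, G2, G3, G4}"

lemma SS_props: "G \<in> SS \<Longrightarrow> wf_graph G \<and> fst G = 9 \<and> (\<forall>u v. snd G u v \<longrightarrow> dg G u = dg G v) \<and> (\<forall>v<9. dg G v \<in> {0,1,2})"
  unfolding SS_def using wf_all fst_all eqdg dg1 dg2 dg3 dg4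
  apply (elim insertE)
  apply (simp_all split: if_splits)
  done

lemma wlS: "G \<in> SS \<Longrightarrow> v < 9 \<Longrightarrow> wl1 G t v = cc t (dg G v)"
  using SS_props wl_reg by metis

definition nd :: "graph \<Rightarrow> nat \<Rightarrow> nat" where "nd G d = card {v. v < fst G \<and> dg G v = d}"

lemma nd_vals: "nd G1 0 = 0" "nd G1 1 = 6" "nd G1 2 = 3"
  "nd G2 0 = 6" "nd G2 1 = 0" "nd G2 2 = 3"
  "nd G3 0 = 3" "nd G3 1 = 0" "nd G3 2 = 6"
  "nd G4 0 = 3" "nd G4 1 = 6" "nd G4 2 = 0"
proof -
  have e: "\<And>G f d. (\<And>v. v < 9 \<Longrightarrow> dg G v = f v) \<Longrightarrow> fst G = 9 \<Longrightarrow> nd G d = card {v. v < 9 \<and> f v = d}"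
    unfolding nd_def by (metis (mono_tags, lifting) Collect_cong)
  show "nd G1 0 = 0" "nd G1 1 = 6" "nd G1 2 = 3"
    by (subst e[OF dg1 fst_all(1)], simp, simp add: coll9 upt_rec)+
  show "nd G2 0 = 6" "nd G2 1 = 0" "nd G2 2 = 3"
    by (subst e[OF dg2 fst_all(2)], simp, simp add: coll9 upt_rec)+
  show "nd G3 0 = 3" "nd G3 1 = 0" "nd G3 2 = 6"
    by (subst e[OF dg3 fst_all(3)], simp, simp add: coll9 upt_rec)+
  show "nd G4 0 = 3" "nd G4 1 = 6" "nd G4 2 = 0"
    by (subst e[OF dg4 fst_all(4)], simp, simp add: coll9 upt_rec)+
qed

lemma cc0: "cc 0 d = Init ()" by simp

lemma cnt_wl: "G \<in> SS \<Longrightarrow> col_count wl1 G t c = card {v. v < 9 \<and> cc t (dg G v) = c}"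
proof -
  assume G: "G \<in> SS"
  have "{v. v < fst G \<and> wl1 G t v = c} = {v. v < 9 \<and> cc t (dg G v) = c}"
    using SS_props[OF G] wlS[OF G] by auto
  then show ?thesis unfolding col_count_def by simp
qed

lemma phi0: "G \<in> SS \<Longrightarrow> phi wl1 G (0, Init ()) = 9"
  unfolding phi_def by (simp add: cnt_wl)

lemma phiS: "G \<in> SS \<Longrightarrow> phi wl1 G (Suc t, cc (Suc t) d) = nd G d"
proof -
  assume G: "G \<in> SS"
  have "{v. v < 9 \<and> cc (Suc t) (dg G v) = cc (Suc t) d} = {v. v < fst G \<and> dg G v = d}"
    using SS_props[OF G] cc_inj by auto
  then show ?thesis unfolding phi_def using G by (simp add: cnt_wl nd_def)
qed

lemma SS_in: "G1 \<in> SS" "G2 \<in> SS" "G3 \<in> SS" "G4 \<in> SS" by (auto simp: SS_def)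

lemma colS: "colours_at wl1 SS t = cc t ` {0,1,2}"
proof
  show "colours_at wl1 SS t \<subseteq> cc t ` {0,1,2}"
  proof
    fix x assume "x \<in> colours_at wl1 SS t"
    then obtain G v where G: "G \<in> SS" "v < fst G" "x = wl1 G t v" unfolding colours_at_def by blast
    then have "v < 9" "dg G v \<in> {0,1,2}" using SS_props[OF G(1)] by auto
    then show "x \<in> cc t ` {0,1,2}" using G wlS by blast
  qed
  have "cc t 0 = wl1 G2 t 0 \<and> G2 \<in> SS \<and> 0 < fst G2"
    using wlS[OF SS_in(2), of 0 t] dg2[of 0] fst_all SS_in by simp
  then have "cc t 0 \<in> colours_at wl1 SS t" unfolding colours_at_def by blast
  moreover have "cc t 1 = wl1 G1 t 0 \<and> G1 \<in> SS \<and> 0 < fst G1"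
    using wlS[OF SS_in(1), of 0 t] dg1[of 0] fst_all SS_in by simp
  then have "cc t 1 \<in> colours_at wl1 SS t" unfolding colours_at_def by blast
  moreover have "cc t 2 = wl1 G1 t 6 \<and> G1 \<in> SS \<and> 6 < fst G1"
    using wlS[OF SS_in(1), of 6 t] dg1[of 6] fst_all SS_in by simp
  then have "cc t 2 \<in> colours_at wl1 SS t" unfolding colours_at_def by blast
  ultimately show "cc t ` {0,1,2} \<subseteq> colours_at wl1 SS t" by auto
qed

lemma featS: "feat_idx wl1 SS T = Sigma {..T} (\<lambda>t. cc t ` {0,1,2})"
  unfolding feat_idx_def colS by auto

lemma pointwise: "phi wl1 G1 i + phi wl1 G2 i = phi wl1 G3 i + phi wl1 G4 i"
  if iI: "i \<in> feat_idx wl1 SS T"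
proof -
  obtain t d where i: "i = (t, cc t d)" and dd: "d \<in> {0,1,2}" using iI featS by auto
  show ?thesis
  proof (cases t)
    case 0
    then show ?thesis using i phi0 SS_in by simp
  next
    case (Suc t')
    from dd show ?thesis using i Suc phiS[OF SS_in(1)] phiS[OF SS_in(2)] phiS[OF SS_in(3)] phiS[OF SS_in(4)] nd_vals
      by (elim insertE) (simp_all del: cc.simps)
  qed
qed

lemma sq_sum: "G \<in> SS \<Longrightarrow> (\<Sum>i\<in>feat_idx wl1 SS T. (phi wl1 G i)^2) = (\<Sum>t\<le>T. (if t = 0 then 81 else 45))"
proof -
  assume G: "G \<in> SS"
  have "(\<Sum>i\<in>feat_idx wl1 SS T. (phi wl1 G i)^2) = (\<Sum>t\<le>T. \<Sum>c\<in>cc t ` {0,1,2}. (phi wl1 G (t,c))^2)"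
    unfolding featS by (subst sum.Sigma) auto
  also have "\<dots> = (\<Sum>t\<le>T. (if t = 0 then 81 else 45))"
  proof (rule sum.cong[OF refl])
    fix t
    show "(\<Sum>c\<in>cc t ` {0,1,2}. (phi wl1 G (t,c))^2) = (if t = 0 then 81 else 45)"
    proof (cases t)
      case 0
      then show ?thesis using phi0[OF G] by simp
    next
      case (Suc t')
      have inj: "inj_on (cc t) {0,1,2}" unfolding Suc by (meson cc_inj inj_onI)
      have "(\<Sum>c\<in>cc t ` {0,1,2}. (phi wl1 G (t,c))^2) = (\<Sum>d\<in>{0,1,2}. (phi wl1 G (t,cc t d))^2)"
        by (subst sum.reindex[OF inj]) simp
      also have "\<dots> = (\<Sum>d\<in>{0,1,2::nat}. (real (nd G d))^2)"
        using Suc phiS[OF G] by simp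
      also have "\<dots> = 45" using G unfolding SS_def by (elim insertE) (simp_all add: nd_vals nd_vals[simplified])
      finally show ?thesis using Suc by simp
    qed
  qed
  finally show ?thesis .
qed

lemma nonsep_gen:
  assumes pw: "\<And>i. i \<in> I \<Longrightarrow> x a i + x b i = x c' i + x d i"
    and S: "a \<in> S" "b \<in> S" "c' \<in> S" "d \<in> S"
    and l: "lab a = 1" "lab b = 1" "lab c' = 0" "lab d = 0"
  shows "\<not> lin_separable I S x lab"
proof
  assume "lin_separable I S x lab"
  then obtain w B where h: "\<forall>G\<in>S.
     (lab G = 1 \<longrightarrow> (\<Sum>i\<in>I. w i * x G i) + B > 0) \<and>
     (lab G = 0 \<longrightarrow> (\<Sum>i\<in>I. w i * x G i) + B < 0)" unfolding lin_separable_def by blast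
  have "(\<Sum>i\<in>I. w i * x a i) + (\<Sum>i\<in>I. w i * x b i) = (\<Sum>i\<in>I. w i * x c' i) + (\<Sum>i\<in>I. w i * x d i)"
    unfolding sum.distrib[symmetric] by (rule sum.cong[OF refl]) (simp add: pw distrib_left[symmetric])
  moreover have "(\<Sum>i\<in>I. w i * x a i) + B > 0" "(\<Sum>i\<in>I. w i * x b i) + B > 0"
    "(\<Sum>i\<in>I. w i * x c' i) + B < 0" "(\<Sum>i\<in>I. w i * x d i) + B < 0"
    using h S l by auto
  ultimately show False by linarith
qed

lemma iso_nd:
  assumes wG: "wf_graph G" and wH: "wf_graph H" and iso: "graph_iso G H"
  shows "nd G d = nd H d"
proof -
  obtain f where bij: "bij_betw f {..<fst G} {..<fst H}"
    and adj: "\<And>a b. a<fst G \<Longrightarrow> b<fst G \<Longrightarrow> snd G a b \<longleftrightarrow> snd H (f a) (f b)"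
    using iso unfolding graph_iso_def by blast
  have inj: "inj_on f {..<fst G}" and img: "f ` {..<fst G} = {..<fst H}"
    using bij by (auto simp: bij_betw_def)
  have pre: "\<exists>u'. u' < fst G \<and> u = f u'" if "u < fst H" for u
  proof -
    have "u \<in> f ` {..<fst G}" using img that by simp
    then show ?thesis by blast
  qed
  have fin: "a < fst G \<Longrightarrow> f a < fst H" for a using img by blast
  have degeq: "dg H (f a) = dg G a" if a: "a < fst G" for a
  proof -
    have "{u. u < fst H \<and> snd H (f a) u} = f ` {u. u < fst G \<and> snd G a u}"
    proof
      show "{u. u < fst H \<and> snd H (f a) u} \<subseteq> f ` {u. u < fst G \<and> snd G a u}"
      proof
        fix u assume u: "u \<in> {u. u < fst H \<and> snd H (f a) u}"
        then obtain u' where u': "u' < fst G" "u = f u'" using pre by blast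
        then have "snd G a u'" using u adj[OF a u'(1)] by simp
        then show "u \<in> f ` {u. u < fst G \<and> snd G a u}" using u' by blast
      qed
      show "f ` {u. u < fst G \<and> snd G a u} \<subseteq> {u. u < fst H \<and> snd H (f a) u}"
      proof
        fix x assume "x \<in> f ` {u. u < fst G \<and> snd G a u}"
        then obtain u where u: "u < fst G" "snd G a u" "x = f u" by blast
        then show "x \<in> {u. u < fst H \<and> snd H (f a) u}" using adj[OF a u(1)] fin by simp
      qed
    qed
    moreover have "inj_on f {u. u < fst G \<and> snd G a u}" using inj by (rule inj_on_subset) auto
    ultimately show ?thesis unfolding dg_def by (simp add: card_image)
  qed
  have "{v. v < fst H \<and> dg H v = d} = f ` {v. v < fst G \<and> dg G v = d}"
  proof
    show "{v. v < fst H \<and> dg H v = d} \<subseteq> f ` {v. v < fst G \<and> dg G v = d}"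
    proof
      fix u assume u: "u \<in> {v. v < fst H \<and> dg H v = d}"
      then obtain u' where u': "u' < fst G" "u = f u'" using pre by blast
      then have "dg G u' = d" using u degeq[OF u'(1)] by simp
      then show "u \<in> f ` {v. v < fst G \<and> dg G v = d}" using u' by blast
    qed
    show "f ` {v. v < fst G \<and> dg G v = d} \<subseteq> {v. v < fst H \<and> dg H v = d}"
    proof
      fix x assume "x \<in> f ` {v. v < fst G \<and> dg G v = d}"
      then obtain u where u: "u < fst G" "dg G u = d" "x = f u" by blast
      then show "x \<in> {v. v < fst H \<and> dg H v = d}" using degeq[OF u(1)] fin by simp
    qed
  qed
  moreover have "inj_on f {v. v < fst G \<and> dg G v = d}" using inj by (rule inj_on_subset) auto
  ultimately show ?thesis unfolding nd_def by (simp add: card_image)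
qed

lemma diffnd: "G \<in> SS \<Longrightarrow> H \<in> SS \<Longrightarrow> G \<noteq> H \<Longrightarrow> nd G 0 \<noteq> nd H 0 \<or> nd G 1 \<noteq> nd H 1"
  unfolding SS_def by (elim insertE emptyE) (simp_all add: nd_vals nd_vals[simplified])

lemma cnt1: "G \<in> SS \<Longrightarrow> col_count wl1 G 1 (cc 1 d) = nd G d"
  using phiS[of G 0 d] unfolding phi_def by simp

lemma dist: "G \<in> SS \<Longrightarrow> H \<in> SS \<Longrightarrow> G \<noteq> H \<Longrightarrow> wl_dist_one_round G H"
proof -
  assume a: "G \<in> SS" "H \<in> SS" "G \<noteq> H"
  then obtain d where "nd G d \<noteq> nd H d" using diffnd by blast
  then have "col_count wl1 G 1 (cc 1 d) \<noteq> col_count wl1 H 1 (cc 1 d)" using cnt1 a by simp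
  then show ?thesis unfolding wl_dist_one_round_def by (intro exI[of _ 1]) auto
qed

lemma noniso: "G \<in> SS \<Longrightarrow> H \<in> SS \<Longrightarrow> G \<noteq> H \<Longrightarrow> \<not> graph_iso G H"
proof
  assume a: "G \<in> SS" "H \<in> SS" "G \<noteq> H" and i: "graph_iso G H"
  have "wf_graph G" "wf_graph H" using SS_props a by auto
  then have "nd G 0 = nd H 0" "nd G 1 = nd H 1" using iso_nd i by auto
  then show False using diffnd a by blast
qed

lemma neqs: "G3 \<noteq> G1" "G3 \<noteq> G2" "G4 \<noteq> G1" "G4 \<noteq> G2"
proof -
  have "nd G3 0 \<noteq> nd G1 0" "nd G3 0 \<noteq> nd G2 0" "nd G4 0 \<noteq> nd G1 0" "nd G4 0 \<noteq> nd G2 0"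
    by (simp_all add: nd_vals)
  then show "G3 \<noteq> G1" "G3 \<noteq> G2" "G4 \<noteq> G1" "G4 \<noteq> G2" by auto
qed

lemma copy_pos: "G \<in> {G1, G2} \<Longrightarrow> v \<in> {6,7,8} \<Longrightarrow> in_induced_copy K3 G v"
proof -
  assume G: "G \<in> {G1, G2}" and v: "v \<in> {6,7,8}"
  have l3: "{..<3::nat} = {0,1,2}" by auto
  have bij: "bij_betw (\<lambda>a. a + 6) {..<fst K3} {6,7,8::nat}"
    unfolding K3_def bij_betw_def l3 by (auto simp: inj_on_def)
  have adj: "\<forall>a<fst K3. \<forall>b<fst K3. snd K3 a b \<longleftrightarrow> snd G (a + 6) (b + 6)"
  proof (intro allI impI)
    fix a b assume "a < fst K3" "b < fst K3"
    then have "a \<in> {0,1,2}" "b \<in> {0,1,2}" by (auto simp: K3_def)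
    then show "snd K3 a b \<longleftrightarrow> snd G (a + 6) (b + 6)"
      using G by (auto simp: K3_def G1_def G2_def mkG_def)
  qed
  show ?thesis unfolding in_induced_copy_def
    using G v bij adj fst_all by (intro exI[of _ "{6,7,8}"] conjI) auto
qed

lemma copy_tri: "in_induced_copy K3 G v \<Longrightarrow> \<exists>x y. snd G v x \<and> snd G v y \<and> snd G x y"
proof -
  assume "in_induced_copy K3 G v"
  then obtain X f where X: "v \<in> X" and bij: "bij_betw f {..<3} X"
    and adj: "\<forall>a<3. \<forall>b<3. snd K3 a b \<longleftrightarrow> snd G (f a) (f b)"
    unfolding in_induced_copy_def K3_def by auto
  have ad: "a < 3 \<Longrightarrow> b < 3 \<Longrightarrow> a \<noteq> b \<Longrightarrow> snd G (f a) (f b)" for a b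
    using adj by (auto simp: K3_def)
  obtain a where a: "a < (3::nat)" "v = f a" using X bij unfolding bij_betw_def by auto
  have "a = 0 \<or> a = 1 \<or> a = 2" using a by auto
  then show ?thesis
  proof (elim disjE)
    assume "a = 0" then show ?thesis using ad[of 0 1] ad[of 0 2] ad[of 1 2] a by auto
  next
    assume "a = 1" then show ?thesis using ad[of 1 0] ad[of 1 2] ad[of 0 2] a by auto
  next
    assume "a = 2" then show ?thesis using ad[of 2 0] ad[of 2 1] ad[of 0 1] a by auto
  qed
qed

lemma copy_neg: "G \<in> {G3, G4} \<Longrightarrow> \<not> in_induced_copy K3 G v"
proof
  assume G: "G \<in> {G3, G4}" and "in_induced_copy K3 G v"
  then obtain x y where "snd G v x" "snd G v y" "snd G x y" using copy_tri by blast
  moreover have "\<And>u w. snd G u w \<Longrightarrow> even u \<noteq> even w" using G by (auto simp: G3_def G4_def mkG_def)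
  ultimately show False by metis
qed

lemma wlF0: "wlF [K3] G 0 v = Init [if in_induced_copy K3 G v then 1 else 0]"
  by (simp add: wlF_def)

abbreviation "cp G v \<equiv> in_induced_copy K3 G v"

lemma phiF1: "G \<in> SS \<Longrightarrow> phi (wlF [K3]) G (0, Init [1]) = card {v. v < 9 \<and> cp G v}"
proof -
  assume "G \<in> SS"
  then have f: "fst G = 9" using SS_props by auto
  have "{v. v < fst G \<and> wlF [K3] G 0 v = Init [1]} = {v. v<9 \<and> cp G v}" using f by (auto simp: wlF0)
  then show ?thesis by (simp add: phi_def col_count_def)
qed
lemma phiF0: "G \<in> SS \<Longrightarrow> phi (wlF [K3]) G (0, Init [0]) = card {v. v < 9 \<and> \<not> cp G v}"
proof -
  assume "G \<in> SS"
  then have f: "fst G = 9" using SS_props by auto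
  have "{v. v < fst G \<and> wlF [K3] G 0 v = Init [0]} = {v. v<9 \<and> \<not> cp G v}" using f by (auto simp: wlF0)
  then show ?thesis by (simp add: phi_def col_count_def)
qed

lemma card_split: "card {v. v < (9::nat) \<and> P v} + card {v. v < 9 \<and> \<not> P v} = 9"
proof -
  have "{v. v < (9::nat) \<and> P v} \<union> {v. v < 9 \<and> \<not> P v} = {..<9}" by auto
  moreover have "card ({v. v < (9::nat) \<and> P v} \<union> {v. v < 9 \<and> \<not> P v}) =
     card {v. v < (9::nat) \<and> P v} + card {v. v < 9 \<and> \<not> P v}"
    by (rule card_Un_disjoint) auto
  ultimately show ?thesis by simp
qed

lemma sign_pos: "G \<in> {G1, G2} \<Longrightarrow>
  phi (wlF [K3]) G (0, Init [1]) - phi (wlF [K3]) G (0, Init [0]) / 3 > 0"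
proof -
  assume G: "G \<in> {G1,G2}"
  then have GS: "G \<in> SS" by (auto simp: SS_def)
  have "{6,7,8} \<subseteq> {v. v < 9 \<and> cp G v}" using copy_pos[OF G] by auto
  then have "card {6,7,8::nat} \<le> card {v. v < 9 \<and> cp G v}" by (rule card_mono[rotated]) auto
  then have k: "3 \<le> card {v. v < 9 \<and> cp G v}" by simp
  have s: "card {v. v < 9 \<and> cp G v} + card {v. v < 9 \<and> \<not> cp G v} = 9" by (rule card_split)
  show ?thesis unfolding phiF1[OF GS] phiF0[OF GS] using k s by linarith
qed

lemma sign_neg: "G \<in> {G3, G4} \<Longrightarrow>
  phi (wlF [K3]) G (0, Init [1]) - phi (wlF [K3]) G (0, Init [0]) / 3 < 0"
proof -
  assume G: "G \<in> {G3,G4}"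
  then have GS: "G \<in> SS" by (auto simp: SS_def)
  have "{v. v < 9 \<and> cp G v} = {}" using copy_neg[OF G] by auto
  then have z: "card {v. v < 9 \<and> cp G v} = 0" by (simp only: card.empty)
  have s: "card {v. v < 9 \<and> cp G v} + card {v. v < 9 \<and> \<not> cp G v} = 9" by (rule card_split)
  have b: "card {v. v < 9 \<and> \<not> cp G v} = 9" using z s by linarith
  have "real (card {v. v < 9 \<and> cp G v}) = 0" "real (card {v. v < 9 \<and> \<not> cp G v}) = 9"
    by (simp only: z b of_nat_0, simp only: b of_nat_numeral)
  then show ?thesis unfolding phiF1[OF GS] phiF0[OF GS] by linarith
qed

lemma feat_finite: "finite S \<Longrightarrow> (\<forall>G\<in>S. finite {..<fst G}) \<Longrightarrow> finite (feat_idx col S T)"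
proof -
  assume S: "finite S"
  have "colours_at col S t = (\<lambda>p. col (fst p) t (snd p)) ` (SIGMA G:S. {..<fst G})" for t
    unfolding colours_at_def by force
  then have "finite (colours_at col S t)" for t using S by simp
  moreover have "feat_idx col S T = Sigma {..T} (colours_at col S)" unfolding feat_idx_def by auto
  ultimately show ?thesis by simp
qed

lemma featF_mem: "(0, Init [1]) \<in> feat_idx (wlF [K3]) SS T" "(0, Init [0]) \<in> feat_idx (wlF [K3]) SS T"
proof -
  have "Init [1] = wlF [K3] G1 0 6 \<and> G1 \<in> SS \<and> 6 < fst G1"
    using copy_pos[of G1 6] wlF0 SS_in fst_all by simp
  then show "(0, Init [1]) \<in> feat_idx (wlF [K3]) SS T"
    unfolding feat_idx_def colours_at_def by blast
  have "Init [0] = wlF [K3] G3 0 0 \<and> G3 \<in> SS \<and> 0 < fst G3"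
    using copy_neg[of G3 0] wlF0 SS_in fst_all by simp
  then show "(0, Init [0]) \<in> feat_idx (wlF [K3]) SS T"
    unfolding feat_idx_def colours_at_def by blast
qed

lemma two_point_sum:
  assumes "finite I" "a \<in> I" "b \<in> I" "a \<noteq> b"
  shows "(\<Sum>i\<in>I. (if i = a then 1 else if i = b then - 1/3 else 0) * y i) = y a - y b / (3::real)"
proof -
  have "(\<Sum>i\<in>I. (if i = a then 1 else if i = b then - 1/3 else 0) * y i)
     = (\<Sum>i\<in>I. (if i = a then y a else 0) + (if i = b then - y b / 3 else 0))"
    using assms(4) by (intro sum.cong) auto
  also have "\<dots> = y a - y b / 3" using assms by (simp add: sum.distrib)
  finally show ?thesis .
qed

lemma norm_pos:
  assumes "finite I" "j \<in> I" "(p::_\<Rightarrow>real) j \<noteq> 0"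
  shows "sqrt (\<Sum>i\<in>I. (p i)^2) > 0"
proof -
  have "(p j)^2 \<le> (\<Sum>i\<in>I. (p i)^2)" using assms by (intro member_le_sum) auto
  moreover have "(p j)^2 > 0" using assms by simp
  ultimately have "(\<Sum>i\<in>I. (p i)^2) > 0" by linarith
  then show ?thesis by simp
qed

lemma sep_both:
  "lin_separable (feat_idx (wlF [K3]) SS T) SS (phi (wlF [K3])) lab \<and>
   lin_separable (feat_idx (wlF [K3]) SS T) SS
      (\<lambda>G. normalise (feat_idx (wlF [K3]) SS T) (phi (wlF [K3]) G)) lab"
  if lab: "\<And>G. G \<in> SS \<Longrightarrow> lab G = (if G = G1 \<or> G = G2 then 1 else 0)"
proof -
  let ?I = "feat_idx (wlF [K3]) SS T"
  let ?a = "(0::nat, Init [1::nat])" and ?b = "(0::nat, Init [0::nat])"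
  define w where "w i = (if i = ?a then 1 else if i = ?b then - 1/3 else (0::real))" for i
  have fin: "finite ?I" by (rule feat_finite) (auto simp: SS_def)
  have ab: "?a \<in> ?I" "?b \<in> ?I" "?a \<noteq> ?b" using featF_mem by auto
  have sm: "(\<Sum>i\<in>?I. w i * y i) = y ?a - y ?b / 3" for y
    unfolding w_def by (rule two_point_sum[OF fin ab])
  let ?v = "\<lambda>G. phi (wlF [K3]) G ?a - phi (wlF [K3]) G ?b / 3"
  have sg: "G \<in> SS \<Longrightarrow> (lab G = 1 \<longrightarrow> ?v G > 0) \<and> (lab G = 0 \<longrightarrow> ?v G < 0)" for G
  proof -
    assume G: "G \<in> SS"
    show ?thesis
    proof (cases "G = G1 \<or> G = G2")
      case True
      then show ?thesis using sign_pos[of G] lab[OF G] by auto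
    next
      case False
      then have "G \<in> {G3, G4}" using G by (auto simp: SS_def)
      then show ?thesis using sign_neg[of G] lab[OF G] False by auto
    qed
  qed
  have "lin_separable ?I SS (phi (wlF [K3])) lab"
    unfolding lin_separable_def
  proof (rule exI[of _ w], rule exI[of _ 0], intro ballI)
    fix G assume G: "G \<in> SS"
    show "(lab G = 1 \<longrightarrow> (\<Sum>i\<in>?I. w i * phi (wlF [K3]) G i) + 0 > 0) \<and>
          (lab G = 0 \<longrightarrow> (\<Sum>i\<in>?I. w i * phi (wlF [K3]) G i) + 0 < 0)"
      unfolding sm add_0_right by (rule sg[OF G])
  qed
  moreover have "lin_separable ?I SS (\<lambda>G. normalise ?I (phi (wlF [K3]) G)) lab"
    unfolding lin_separable_def
  proof (rule exI[of _ w], rule exI[of _ 0], intro ballI)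
    fix G assume G: "G \<in> SS"
    let ?r = "sqrt (\<Sum>j\<in>?I. (phi (wlF [K3]) G j)^2)"
    have v: "(\<Sum>i\<in>?I. w i * normalise ?I (phi (wlF [K3]) G) i) = ?v G / ?r"
      unfolding sm normalise_def by (simp add: diff_divide_distrib)
    have "?v G \<noteq> 0" using sg[OF G] lab[OF G] by (cases "G = G1 \<or> G = G2") auto
    then have "phi (wlF [K3]) G ?a \<noteq> 0 \<or> phi (wlF [K3]) G ?b \<noteq> 0" by auto
    then have r: "?r > 0" using norm_pos[OF fin] ab by blast
    show "(lab G = 1 \<longrightarrow> (\<Sum>i\<in>?I. w i * normalise ?I (phi (wlF [K3]) G) i) + 0 > 0) \<and>
          (lab G = 0 \<longrightarrow> (\<Sum>i\<in>?I. w i * normalise ?I (phi (wlF [K3]) G) i) + 0 < 0)"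
      unfolding v using sg[OF G] r by (simp add: divide_pos_pos divide_neg_pos)
  qed
  ultimately show ?thesis by blast
qed

lemma nonsep_both:
  "\<not> lin_separable (feat_idx wl1 SS T) SS (phi wl1) lab \<and>
   \<not> lin_separable (feat_idx wl1 SS T) SS (\<lambda>G. normalise (feat_idx wl1 SS T) (phi wl1 G)) lab"
  if lab: "\<And>G. G \<in> SS \<Longrightarrow> lab G = (if G = G1 \<or> G = G2 then 1 else 0)"
proof -
  let ?I = "feat_idx wl1 SS T"
  have l: "lab G1 = 1" "lab G2 = 1" "lab G3 = 0" "lab G4 = 0" using lab SS_in neqs by auto
  have "\<not> lin_separable ?I SS (phi wl1) lab"
    by (rule nonsep_gen[OF pointwise SS_in l])
  moreover have "\<not> lin_separable ?I SS (\<lambda>G. normalise ?I (phi wl1 G)) lab"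
  proof (rule nonsep_gen[OF _ SS_in l])
    fix i assume i: "i \<in> ?I"
    let ?r = "sqrt (\<Sum>t\<le>T. (if t = 0 then 81 else 45::real))"
    have "normalise ?I (phi wl1 G) i = phi wl1 G i / ?r" if "G \<in> SS" for G
      unfolding normalise_def sq_sum[OF that] ..
    then show "normalise ?I (phi wl1 G1) i + normalise ?I (phi wl1 G2) i =
               normalise ?I (phi wl1 G3) i + normalise ?I (phi wl1 G4) i"
      using SS_in pointwise[OF i] by (simp add: add_divide_distrib[symmetric])
  qed
  ultimately show ?thesis by blast
qed

theorem proposition12:
  fixes n :: nat
  assumes "n \<ge> 10"
  shows "\<exists>(S :: graph set) (c :: graph \<Rightarrow> nat) (F :: graph).
    finite S \<and> (\<forall>G\<in>S. wf_graph G \<and> fst G \<le> n) \<and>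
    (\<forall>G\<in>S. \<forall>H\<in>S. G \<noteq> H \<longrightarrow> \<not> graph_iso G H) \<and>
    (\<forall>G\<in>S. c G \<in> {0, 1}) \<and> wf_graph F \<and>
    (\<forall>G\<in>S. \<forall>H\<in>S. G \<noteq> H \<longrightarrow> wl_dist_one_round G H) \<and>
    (\<forall>T. \<not> lin_separable (feat_idx wl1 S T) S
          (\<lambda>G. normalise (feat_idx wl1 S T) (phi wl1 G)) c) \<and>
    (\<forall>T. lin_separable (feat_idx (wlF [F]) S T) S
          (\<lambda>G. normalise (feat_idx (wlF [F]) S T) (phi (wlF [F]) G)) c) \<and>
    (\<forall>T. \<not> lin_separable (feat_idx wl1 S T) S (phi wl1) c) \<and>
    (\<forall>T. lin_separable (feat_idx (wlF [F]) S T) S (phi (wlF [F])) c)"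
proof -
  define lab where "lab G = (if G = G1 \<or> G = G2 then 1 else (0::nat))" for G
  have labE: "\<And>G. G \<in> SS \<Longrightarrow> lab G = (if G = G1 \<or> G = G2 then 1 else 0)" by (simp add: lab_def)
  have "finite SS" by (simp add: SS_def)
  moreover have "\<forall>G\<in>SS. wf_graph G \<and> fst G \<le> n" using SS_props assms by auto
  moreover have "\<forall>G\<in>SS. \<forall>H\<in>SS. G \<noteq> H \<longrightarrow> \<not> graph_iso G H" using noniso by blast
  moreover have "\<forall>G\<in>SS. lab G \<in> {0, 1}" by (simp add: lab_def)
  moreover have "\<forall>G\<in>SS. \<forall>H\<in>SS. G \<noteq> H \<longrightarrow> wl_dist_one_round G H" using dist by blast
  ultimately show ?thesis
    using wf_all(5) sep_both[OF labE] nonsep_both[OF labE]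
    by (intro exI[of _ SS] exI[of _ lab] exI[of _ K3]) blast
qed

end
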